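(* Let $k,n$ be positive integers and $\gamma>0$. Let $\preceq_k$ be a quasi-order on $[k]=\{1,\dots,k\}$ and $\preceq$ a quasi-order on $[kn]$. Assume that there are at least $\gamma k n^k$ tuples $(s_1,\dots,s_k)\in\prod_{i=1}^k[(i-1)n+1,in]$ such that $s_i\preceq s_j\iff i\preceq_k j$ for all $i,j\in[k]$. Then there are sets $S_i\subseteq[(i-1)n+1,in]$ ($1\le i\le k$), each of size at least $\gamma n$, such that for every tuple $(s_1,\dots,s_k)\in\prod_{i=1}^k S_i$ and all $i,j\in[k]$ we have $s_i\preceq s_j\iff i\preceq_k j$.
   Context: A quasi-order here means a total preorder (a reflexive, transitive and total relation). $[a,b]$ denotes the set of integers $m$ with $a\le m\le b$. *)

theory Defs
  imports Complex_Main "HOL-Library.FuncSet"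
begin

definition quasi_order_on :: "'a set \<Rightarrow> 'a rel \<Rightarrow> bool" where
  "quasi_order_on A r \<longleftrightarrow> preorder_on A r \<and> total_on A r"

end

theory Submission
  imports Defs
begin


lemma card_PiE_one:
  assumes "finite I" "j \<in> I" "\<forall>i\<in>I-{j}. card (B i) \<le> n"
  shows "card (Pi\<^sub>E I B) \<le> card (B j) * n ^ (card I - 1)"
proof -
  have "card (Pi\<^sub>E I B) = card (B j) * (\<Prod>i\<in>I-{j}. card (B i))"
    using assms by (simp add: card_PiE prod.remove)
  also have "(\<Prod>i\<in>I-{j}. card (B i)) \<le> (\<Prod>i\<in>I-{j}. n)"
    using assms by (intro prod_mono) auto
  also have "(\<Prod>i\<in>I-{j}. n) = n ^ (card I - 1)" using assms by simp
  finally show ?thesis by simp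
qed

lemma card_PiE_two:
  assumes "finite I" "j \<in> I" "j' \<in> I" "j \<noteq> j'" "\<forall>i\<in>I-{j,j'}. card (B i) \<le> n"
  shows "card (Pi\<^sub>E I B) \<le> card (B j) * card (B j') * n ^ (card I - 2)"
proof -
  have r2: "(\<Prod>i\<in>I-{j}. card (B i)) = card (B j') * (\<Prod>i\<in>I-{j}-{j'}. card (B i))"
    using assms by (intro prod.remove) auto
  have "card (Pi\<^sub>E I B) = card (B j) * (card (B j') * (\<Prod>i\<in>I-{j}-{j'}. card (B i)))"
    using assms r2 by (simp add: card_PiE prod.remove)
  also have "(\<Prod>i\<in>I-{j}-{j'}. card (B i)) \<le> (\<Prod>i\<in>I-{j}-{j'}. n)"
    using assms by (intro prod_mono) auto
  also have "(\<Prod>i\<in>I-{j}-{j'}. n) = n ^ (card I - 2)" using assms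
    by (simp add: card_Diff_singleton_if numeral_2_eq_2)
  finally show ?thesis by (simp add: mult.assoc)
qed

lemma card_restrict_split:
  assumes "finite I" "I = C \<union> I'" "C \<inter> I' = {}" "\<forall>i\<in>I. finite (B i)"
  shows "card {s\<in>Pi\<^sub>E I B. P (restrict s I')} \<le> card (Pi\<^sub>E C B) * card {t\<in>Pi\<^sub>E I' B. P t}"
proof -
  let ?h = "\<lambda>s. (restrict s C, restrict s I')"
  have inj: "inj_on ?h {s\<in>Pi\<^sub>E I B. P (restrict s I')}"
  proof (rule inj_onI)
    fix s s' assume s: "s \<in> {s\<in>Pi\<^sub>E I B. P (restrict s I')}" and s': "s' \<in> {s\<in>Pi\<^sub>E I B. P (restrict s I')}"
      and eq: "?h s = ?h s'"
    show "s = s'"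
    proof
      fix x
      show "s x = s' x"
      proof (cases "x \<in> I")
        case True
        have "restrict s C x = restrict s' C x" "restrict s I' x = restrict s' I' x" using eq by auto
        then show ?thesis using True assms(2) by (auto simp: restrict_def split: if_splits)
      next
        case False
        then show ?thesis using s s' by (auto simp: PiE_def extensional_def)
      qed
    qed
  qed
  have sub: "?h ` {s\<in>Pi\<^sub>E I B. P (restrict s I')} \<subseteq> Pi\<^sub>E C B \<times> {t\<in>Pi\<^sub>E I' B. P t}"
    using assms(2) by (auto simp: PiE_def Pi_def)
  have f1: "finite (Pi\<^sub>E I' B)" "finite (Pi\<^sub>E C B)" using assms by (auto intro!: finite_PiE)
  have fin: "finite (Pi\<^sub>E C B \<times> {t\<in>Pi\<^sub>E I' B. P t})"
    using f1 by (intro finite_cartesian_product) auto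
  have "card {s\<in>Pi\<^sub>E I B. P (restrict s I')} \<le> card (Pi\<^sub>E C B \<times> {t\<in>Pi\<^sub>E I' B. P t})"
    using card_inj_on_le[OF inj sub fin] .
  then show ?thesis by (simp add: card_cartesian_product)
qed

lemma dep_count:
  fixes c :: real
  assumes "finite I" "j \<in> I" "j' \<in> I" "j \<noteq> j'" "\<forall>i\<in>I. finite (B i) \<and> card (B i) \<le> n"
    and "\<forall>x\<in>B j'. real (card (Y x)) < c" "\<forall>x. Y x \<subseteq> B j" "c > 0" "n > 0"
  shows "real (card {s\<in>Pi\<^sub>E I B. s j \<in> Y (s j')}) < c * (real n) ^ (card I - 1)"
proof -
  have sub: "{s\<in>Pi\<^sub>E I B. s j \<in> Y (s j')} \<subseteq> (\<Union>x\<in>B j'. Pi\<^sub>E I (B(j := Y x, j' := {x})))"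
    using assms(2,3,4) by (auto simp: PiE_def Pi_def)
  have fin: "finite (B j')" using assms by auto
  have finY: "finite (Y x)" for x using assms(5,7,2) finite_subset by blast
  have "card {s\<in>Pi\<^sub>E I B. s j \<in> Y (s j')} \<le> card (\<Union>x\<in>B j'. Pi\<^sub>E I (B(j := Y x, j' := {x})))"
    using sub assms fin finY by (intro card_mono finite_UN_I finite_PiE) auto
  also have "\<dots> \<le> (\<Sum>x\<in>B j'. card (Pi\<^sub>E I (B(j := Y x, j' := {x}))))"
    using card_UN_le[OF fin] .
  also have "\<dots> \<le> (\<Sum>x\<in>B j'. card (Y x) * n ^ (card I - 2))"
  proof (rule sum_mono)
    fix x assume "x \<in> B j'"
    have "card (Pi\<^sub>E I (B(j := Y x, j' := {x}))) \<le> card ((B(j := Y x, j' := {x})) j) * card ((B(j := Y x, j' := {x})) j') * n ^ (card I - 2)"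
      using assms by (intro card_PiE_two) auto
    then show "card (Pi\<^sub>E I (B(j := Y x, j' := {x}))) \<le> card (Y x) * n ^ (card I - 2)"
      using assms(4) by simp
  qed
  finally have le: "real (card {s\<in>Pi\<^sub>E I B. s j \<in> Y (s j')}) \<le> (\<Sum>x\<in>B j'. real (card (Y x)) * real n ^ (card I - 2))"
    by (metis (mono_tags, lifting) of_nat_le_iff of_nat_mult of_nat_power of_nat_sum sum.cong)
  have cI: "card I \<ge> 2"
  proof -
    have "{j, j'} \<subseteq> I" using assms by auto
    then have "card {j,j'} \<le> card I" using assms(1) by (rule card_mono[rotated])
    then show ?thesis using assms(4) by simp
  qed
  show ?thesis
  proof (cases "B j' = {}")
    case True
    then show ?thesis using le assms by simp
  next
    case False
    have "(\<Sum>x\<in>B j'. real (card (Y x)) * real n ^ (card I - 2)) < (\<Sum>x\<in>B j'. c * real n ^ (card I - 2))"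
      using False fin assms(6,9) by (intro sum_strict_mono) auto
    also have "\<dots> = real (card (B j')) * c * real n ^ (card I - 2)" by simp
    also have "\<dots> \<le> real n * c * real n ^ (card I - 2)"
      using assms by (intro mult_right_mono) auto
    also have "\<dots> = c * real n ^ (card I - 1)"
    proof -
      from cI obtain q where "card I = Suc (Suc q)" by (metis add_2_eq_Suc le_Suc_ex)
      then show ?thesis by simp
    qed
    finally show ?thesis using le by linarith
  qed
qed

lemma obtain_thr: "\<exists>r::nat. (\<forall>w<r. \<not> ok w) \<and> (ok r \<or> M < r)"
proof (cases "\<exists>r. ok r")
  case True
  then show ?thesis by (metis LeastI not_less_Least)
next
  case False
  then show ?thesis by (intro exI[of _ "Suc M"]) auto
qed


definition goodt :: "('i \<Rightarrow> nat) \<Rightarrow> ('a \<Rightarrow> nat) \<Rightarrow> 'i set \<Rightarrow> ('i \<Rightarrow> 'a) \<Rightarrow> bool" where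
  "goodt g f I s \<longleftrightarrow> (\<forall>i\<in>I. \<forall>j\<in>I. (g i \<le> g j) = (f (s i) \<le> f (s j)))"

lemma main:
  fixes f :: "'a \<Rightarrow> nat" and g :: "'i \<Rightarrow> nat" and B :: "'i \<Rightarrow> 'a set" and n :: nat and \<gamma> :: real
  assumes "finite I" "\<forall>i\<in>I. finite (B i) \<and> card (B i) \<le> n" "n > 0" "\<gamma> > 0"
    and "\<not>(\<exists>S. (\<forall>i\<in>I. S i \<subseteq> {x\<in>B i. a \<le> f x} \<and> \<gamma>*n \<le> card (S i)) \<and> (\<forall>s\<in>Pi\<^sub>E I S. goodt g f I s))"
  shows "real (card {s\<in>Pi\<^sub>E I B. (\<forall>i\<in>I. a \<le> f (s i)) \<and> goodt g f I s}) < \<gamma> * card I * n ^ card I"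
  using assms
proof (induction "card I" arbitrary: I a rule: less_induct)
  case less
  note fI = less.prems(1) and Bn = less.prems(2) and noS = less.prems(5)
  define G where "G J b = {s\<in>Pi\<^sub>E J B. (\<forall>i\<in>J. b \<le> f (s i)) \<and> goodt g f J s}" for J b
  show ?case
  proof (cases "I = {}")
    case True
    then show ?thesis using noS by (auto simp: goodt_def)
  next
    case False
    define m where "m = Min (g ` I)"
    define C where "C = {i\<in>I. g i = m}"
    define I' where "I' = I - C"
    have "m \<in> g ` I" unfolding m_def using False fI by (intro Min_in) auto
    then have Cne: "C \<noteq> {}" unfolding C_def by auto
    have CI: "C \<subseteq> I" unfolding C_def by auto
    have fC: "finite C" using CI fI finite_subset by blast
    have fI': "finite I'" using fI unfolding I'_def by auto
    have IU: "I = C \<union> I'" "C \<inter> I' = {}" using CI unfolding I'_def by auto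
    have gC: "g i = m" if "i \<in> C" for i using that unfolding C_def by auto
    have gI': "m < g j" if "j \<in> I'" for j
    proof -
      have "m \<le> g j" using that fI unfolding m_def I'_def by auto
      moreover have "g j \<noteq> m" using that unfolding I'_def C_def by auto
      ultimately show ?thesis by simp
    qed
    have cardI: "card I = card C + card I'" using IU fC fI' by (simp add: card_Un_disjoint)
    have cardI'lt: "card I' < card I" using cardI Cne fC by auto
    obtain c0 where c0: "c0 \<in> C" using Cne by auto
    have finG: "finite (G I a)"
    proof -
      have "finite (Pi\<^sub>E I B)" using fI Bn by (intro finite_PiE) auto
      then show ?thesis unfolding G_def by auto
    qed
    have goodC: "f (s c) = f (s c0)" if "s \<in> G I a" "c \<in> C" for s c
    proof -
      have "goodt g f I s" using that unfolding G_def by auto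
      then have "(g c \<le> g c0) = (f (s c) \<le> f (s c0))" "(g c0 \<le> g c) = (f (s c0) \<le> f (s c))"
        using that c0 CI unfolding goodt_def by auto
      then show ?thesis using gC[OF c0] gC[OF that(2)] by simp
    qed
    have goodI': "f (s c0) < f (s j)" if "s \<in> G I a" "j \<in> I'" for s j
    proof -
      have "goodt g f I s" using that unfolding G_def by auto
      then have "(g j \<le> g c0) = (f (s j) \<le> f (s c0))"
        using that c0 CI IU unfolding goodt_def by auto
      then show ?thesis using gC[OF c0] gI'[OF that(2)] by simp
    qed
    define L where "L r = {s \<in> G I a. f (s c0) < r}" for r
    define U where "U r = {s \<in> G I a. r \<le> f (s c0)}" for r
    define M where "M = Max (f ` B c0)"
    have UM: "U r = {}" if "M < r" for r
    proof -
      have "f (s c0) \<le> M" if "s \<in> G I a" for s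
      proof -
        have "s c0 \<in> B c0" using that c0 CI unfolding G_def by auto
        then show ?thesis unfolding M_def using Bn c0 CI by (intro Max_ge) auto
      qed
      then show ?thesis unfolding U_def using that by fastforce
    qed
    have cIpos: "card I > 0" using False fI by (simp add: card_gt_0_iff)
    have npow: "real n * real n ^ (card I - 1) = real n ^ card I"
      using cIpos by (metis Suc_diff_1 power_Suc)
    have finPI: "finite (Pi\<^sub>E I B')" if "\<forall>i\<in>I. finite (B' i)" for B'
      using fI that by (intro finite_PiE) auto
    have claim: "\<exists>r. real (card (L r)) < \<gamma> * card C * n ^ card I \<and> (U r = {} \<or> (a \<le> r \<and> (\<exists>SC. (\<forall>j\<in>C. SC j \<subseteq> {x\<in>B j. a \<le> f x \<and> f x \<le> r} \<and> \<gamma>*n \<le> card (SC j)) \<and> (\<forall>j\<in>C. \<forall>j'\<in>C. j\<noteq>j' \<longrightarrow> (\<forall>x\<in>SC j. \<forall>y\<in>SC j'. f x = f y)))))"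
    proof (cases "card C = 1")
      case True
      then obtain i0 where C1: "C = {i0}" by (auto simp: card_Suc_eq)
      have i0: "i0 \<in> I" "c0 = i0" using C1 CI c0 by auto
      define ok where "ok r \<longleftrightarrow> a \<le> r \<and> \<gamma>*n \<le> card {x\<in>B i0. a \<le> f x \<and> f x \<le> r}" for r
      obtain r where r1: "\<forall>w<r. \<not> ok w" and r2: "ok r \<or> M < r" using obtain_thr by blast
      define X where "X = {x\<in>B i0. a \<le> f x \<and> f x < r}"
      have cX: "real (card X) < \<gamma>*n"
      proof (cases "r > 0 \<and> a \<le> r - 1")
        case True
        then have "X = {x\<in>B i0. a \<le> f x \<and> f x \<le> r-1}" unfolding X_def by auto
        moreover have "\<not> ok (r-1)" using r1 True by auto
        ultimately show ?thesis using True unfolding ok_def by auto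
      next
        case False
        then have "X = {}" unfolding X_def by auto
        then show ?thesis using less.prems(3,4) by simp
      qed
      have XB: "X \<subseteq> B i0" unfolding X_def by auto
      have Lsub: "L r \<subseteq> Pi\<^sub>E I (B(i0 := X))"
      proof
        fix s assume "s \<in> L r"
        then have s: "s \<in> Pi\<^sub>E I B" "\<forall>i\<in>I. a \<le> f (s i)" "f (s i0) < r"
          unfolding L_def G_def using i0 by auto
        have "s i0 \<in> X" using s i0 unfolding X_def by (auto simp: PiE_def Pi_def)
        then show "s \<in> Pi\<^sub>E I (B(i0 := X))" using s(1) by (auto simp: PiE_def Pi_def)
      qed
      have fX: "finite X" using XB Bn i0 finite_subset by blast
      have "card (L r) \<le> card (Pi\<^sub>E I (B(i0 := X)))"
        using Lsub fX Bn by (intro card_mono finPI) auto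
      also have "\<dots> \<le> card ((B(i0 := X)) i0) * n ^ (card I - 1)"
        using fI i0 Bn by (intro card_PiE_one) auto
      finally have "real (card (L r)) \<le> real (card X) * real n ^ (card I - 1)"
        by (metis fun_upd_same of_nat_le_iff of_nat_mult of_nat_power)
      also have "\<dots> < \<gamma> * real n * real n ^ (card I - 1)"
        using cX less.prems(3) by (intro mult_strict_right_mono) auto
      also have "\<dots> = \<gamma> * card C * n ^ card I" using True npow by (simp add: mult.assoc)
      finally have Lb: "real (card (L r)) < \<gamma> * card C * n ^ card I" .
      show ?thesis
      proof (cases "ok r")
        case True
        show ?thesis
        proof (intro exI[of _ r] conjI disjI2 exI[of _ "\<lambda>j. {x\<in>B j. a \<le> f x \<and> f x \<le> r}"])
          show "a \<le> r" using True unfolding ok_def by simp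
          show "\<forall>j\<in>C. {x\<in>B j. a \<le> f x \<and> f x \<le> r} \<subseteq> {x\<in>B j. a \<le> f x \<and> f x \<le> r} \<and> \<gamma>*n \<le> card {x\<in>B j. a \<le> f x \<and> f x \<le> r}"
            using True C1 unfolding ok_def by simp
          show "\<forall>j\<in>C. \<forall>j'\<in>C. j\<noteq>j' \<longrightarrow> (\<forall>x\<in>{x\<in>B j. a \<le> f x \<and> f x \<le> r}. \<forall>y\<in>{x\<in>B j'. a \<le> f x \<and> f x \<le> r}. f x = f y)"
            using C1 by simp
        qed (rule Lb)
      next
        case False
        then have "U r = {}" using r2 UM by auto
        then show ?thesis using Lb by blast
      qed
    next
      case False
      have C2: "card C \<ge> 2" using False Cne fC by (metis One_nat_def card_0_eq less_2_cases not_less)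
      have oth: "\<exists>j'. j' \<in> C \<and> j' \<noteq> j" if "j \<in> C" for j
      proof (rule ccontr)
        assume "\<not> ?thesis"
        then have "C \<subseteq> {j}" by auto
        then have "card C \<le> 1" using card_mono[of "{j}" C] by simp
        then show False using C2 by simp
      qed
      define p where "p j = (SOME j'. j' \<in> C \<and> j' \<noteq> j)" for j
      have p: "p j \<in> C \<and> p j \<noteq> j" if "j \<in> C" for j
        unfolding p_def using someI_ex[OF oth[OF that]] .
      define ok where "ok r \<longleftrightarrow> a \<le> r \<and> (\<exists>w. a \<le> w \<and> w \<le> r \<and> (\<forall>j\<in>C. \<gamma>*n \<le> card {x\<in>B j. f x = w}))" for r
      obtain r where r1: "\<forall>w<r. \<not> ok w" and r2: "ok r \<or> M < r" using obtain_thr by blast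
      define Y where "Y j x = {z\<in>B j. f z = f x \<and> real (card {y\<in>B j. f y = f x}) < \<gamma>*n}" for j x
      define T where "T j = {s\<in>Pi\<^sub>E I B. s j \<in> Y j (s (p j))}" for j
      have Lsub: "L r \<subseteq> (\<Union>j\<in>C. T j)"
      proof
        fix s assume "s \<in> L r"
        then have sG: "s \<in> G I a" and sr: "f (s c0) < r" unfolding L_def by auto
        have s: "s \<in> Pi\<^sub>E I B" "\<forall>i\<in>I. a \<le> f (s i)" using sG unfolding G_def by auto
        define w where "w = f (s c0)"
        have aw: "a \<le> w" using s c0 CI unfolding w_def by auto
        have "\<not> ok w" using r1 sr unfolding w_def by auto
        then obtain j where j: "j \<in> C" and cj: "\<not> \<gamma>*n \<le> card {x\<in>B j. f x = w}"
          using aw unfolding ok_def by auto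
        have fj: "f (s j) = w" "f (s (p j)) = w" using goodC[OF sG] j p[OF j] unfolding w_def by auto
        have "s j \<in> B j" using s j CI by (auto simp: PiE_def Pi_def)
        then have "s j \<in> Y j (s (p j))" using fj cj unfolding Y_def by auto
        then show "s \<in> (\<Union>j\<in>C. T j)" using j s unfolding T_def by auto
      qed
      have Tb: "real (card (T j)) < \<gamma> * n ^ card I" if j: "j \<in> C" for j
      proof -
        have "\<forall>x\<in>B (p j). real (card (Y j x)) < \<gamma>*n"
        proof
          fix x
          show "real (card (Y j x)) < \<gamma>*n"
          proof (cases "real (card {y\<in>B j. f y = f x}) < \<gamma>*n")
            case True
            then have "Y j x = {y\<in>B j. f y = f x}" unfolding Y_def by auto
            then show ?thesis using True by simp
          next
            case False
            then have "Y j x = {}" unfolding Y_def by auto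
            then show ?thesis using less.prems(3,4) by simp
          qed
        qed
        moreover have "\<forall>x. Y j x \<subseteq> B j" unfolding Y_def by auto
        ultimately have "real (card (T j)) < (\<gamma>*n) * (real n) ^ (card I - 1)"
          unfolding T_def using dep_count[of I j "p j" B n "Y j" "\<gamma>*n"] fI j p[OF j] CI Bn less.prems(3,4)
          by (metis mult_pos_pos of_nat_0_less_iff subsetD)
        also have "\<dots> = \<gamma> * n ^ card I" using npow by (simp add: mult.assoc)
        finally show ?thesis .
      qed
      have finT: "finite (T j)" for j
        unfolding T_def using Bn by (intro finite_subset[OF _ finPI[of B]]) auto
      have "card (L r) \<le> card (\<Union>j\<in>C. T j)"
        using Lsub fC finT by (intro card_mono) auto
      also have "\<dots> \<le> (\<Sum>j\<in>C. card (T j))" using card_UN_le[OF fC] .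
      finally have "real (card (L r)) \<le> (\<Sum>j\<in>C. real (card (T j)))"
        by (metis of_nat_le_iff of_nat_sum)
      also have "\<dots> < (\<Sum>j\<in>C. \<gamma> * n ^ card I)"
        using Tb fC Cne by (intro sum_strict_mono) auto
      also have "\<dots> = \<gamma> * card C * n ^ card I" by simp
      finally have Lb: "real (card (L r)) < \<gamma> * card C * n ^ card I" .
      show ?thesis
      proof (cases "ok r")
        case True
        then obtain w where w: "a \<le> w" "w \<le> r" "\<forall>j\<in>C. \<gamma>*n \<le> card {x\<in>B j. f x = w}"
          unfolding ok_def by auto
        show ?thesis
        proof (intro exI[of _ r] conjI disjI2 exI[of _ "\<lambda>j. {x\<in>B j. f x = w}"])
          show "a \<le> r" using w by simp
          show "\<forall>j\<in>C. {x\<in>B j. f x = w} \<subseteq> {x\<in>B j. a \<le> f x \<and> f x \<le> r} \<and> \<gamma>*n \<le> card {x\<in>B j. f x = w}"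
            using w by auto
          show "\<forall>j\<in>C. \<forall>j'\<in>C. j\<noteq>j' \<longrightarrow> (\<forall>x\<in>{x\<in>B j. f x = w}. \<forall>y\<in>{x\<in>B j'. f x = w}. f x = f y)"
            by simp
        qed (rule Lb)
      next
        case False
        then have "U r = {}" using r2 UM by auto
        then show ?thesis using Lb by blast
      qed
    qed
    then obtain r where Lb: "real (card (L r)) < \<gamma> * card C * n ^ card I"
      and Ur: "U r = {} \<or> (a \<le> r \<and> (\<exists>SC. (\<forall>j\<in>C. SC j \<subseteq> {x\<in>B j. a \<le> f x \<and> f x \<le> r} \<and> \<gamma>*n \<le> card (SC j)) \<and> (\<forall>j\<in>C. \<forall>j'\<in>C. j\<noteq>j' \<longrightarrow> (\<forall>x\<in>SC j. \<forall>y\<in>SC j'. f x = f y))))"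
      by blast
    have Ub: "real (card (U r)) \<le> \<gamma> * card I' * n ^ card I"
    proof (cases "U r = {}")
      case True
      then show ?thesis using less.prems(4) by simp
    next
      case False
      with Ur obtain SC where ar: "a \<le> r" and SC1: "\<forall>j\<in>C. SC j \<subseteq> {x\<in>B j. a \<le> f x \<and> f x \<le> r} \<and> \<gamma>*n \<le> card (SC j)"
        and SC2: "\<forall>j\<in>C. \<forall>j'\<in>C. j\<noteq>j' \<longrightarrow> (\<forall>x\<in>SC j. \<forall>y\<in>SC j'. f x = f y)" by blast
      have noS': "\<not>(\<exists>S. (\<forall>i\<in>I'. S i \<subseteq> {x\<in>B i. Suc r \<le> f x} \<and> \<gamma>*n \<le> card (S i)) \<and> (\<forall>s\<in>Pi\<^sub>E I' S. goodt g f I' s))"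
      proof
        assume "\<exists>S. (\<forall>i\<in>I'. S i \<subseteq> {x\<in>B i. Suc r \<le> f x} \<and> \<gamma>*n \<le> card (S i)) \<and> (\<forall>s\<in>Pi\<^sub>E I' S. goodt g f I' s)"
        then obtain S' where S'1: "\<forall>i\<in>I'. S' i \<subseteq> {x\<in>B i. Suc r \<le> f x} \<and> \<gamma>*n \<le> card (S' i)"
          and S'2: "\<forall>s\<in>Pi\<^sub>E I' S'. goodt g f I' s" by blast
        define S where "S i = (if i \<in> C then SC i else S' i)" for i
        have A1: "\<forall>i\<in>I. S i \<subseteq> {x\<in>B i. a \<le> f x} \<and> \<gamma>*n \<le> card (S i)"
        proof
          fix i assume "i \<in> I"
          then show "S i \<subseteq> {x\<in>B i. a \<le> f x} \<and> \<gamma>*n \<le> card (S i)"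
          proof (cases "i \<in> C")
            case True
            then have "SC i \<subseteq> {x\<in>B i. a \<le> f x \<and> f x \<le> r}" "\<gamma>*n \<le> card (SC i)" using SC1 by auto
            then show ?thesis using True unfolding S_def by auto
          next
            case False
            then have "i \<in> I'" using \<open>i \<in> I\<close> IU by auto
            then have "S' i \<subseteq> {x\<in>B i. Suc r \<le> f x}" "\<gamma>*n \<le> card (S' i)" using S'1 by auto
            then show ?thesis using False ar unfolding S_def by auto
          qed
        qed
        have A2: "goodt g f I s" if s: "s \<in> Pi\<^sub>E I S" for s
        proof -
          have sC: "s i \<in> SC i" if "i \<in> C" for i
          proof -
            have "i \<in> I" using that IU by auto
            then have "s i \<in> S i" using PiE_mem[OF s] by blast
            then show ?thesis using that unfolding S_def by simp
          qed
          have sI': "s i \<in> S' i" if "i \<in> I'" for i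
          proof -
            have "i \<in> I" "i \<notin> C" using that IU by auto
            then have "s i \<in> S i" using PiE_mem[OF s] by blast
            then show ?thesis using \<open>i \<notin> C\<close> unfolding S_def by simp
          qed
          have "restrict s I' \<in> Pi\<^sub>E I' S'" using sI' by auto
          then have gr: "goodt g f I' (restrict s I')" using S'2 by blast
          show ?thesis unfolding goodt_def
          proof (intro ballI)
            fix i j assume i: "i \<in> I" and j: "j \<in> I"
            show "(g i \<le> g j) = (f (s i) \<le> f (s j))"
            proof (cases "i \<in> C")
              case iC: True
              show ?thesis
              proof (cases "j \<in> C")
                case True
                have "f (s i) = f (s j)"
                proof (cases "i = j")
                  case False
                  then show ?thesis using SC2 iC True sC[OF iC] sC[OF True] by blast
                qed simp
                then show ?thesis using gC[OF iC] gC[OF True] by simp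
              next
                case False
                then have jI': "j \<in> I'" using j IU by auto
                have "f (s i) \<le> r" using sC[OF iC] SC1 iC by auto
                moreover have "Suc r \<le> f (s j)" using sI'[OF jI'] S'1 jI' by auto
                ultimately show ?thesis using gC[OF iC] gI'[OF jI'] by simp
              qed
            next
              case iI': False
              then have iI': "i \<in> I'" using i IU by auto
              show ?thesis
              proof (cases "j \<in> C")
                case jC: True
                have "f (s j) \<le> r" using sC[OF jC] SC1 jC by auto
                moreover have "Suc r \<le> f (s i)" using sI'[OF iI'] S'1 iI' by auto
                ultimately show ?thesis using gC[OF jC] gI'[OF iI'] by simp
              next
                case False
                then have jI': "j \<in> I'" using j IU by auto
                then show ?thesis using gr iI' unfolding goodt_def by auto
              qed
            qed
          qed
        qed
        have "(\<forall>i\<in>I. S i \<subseteq> {x\<in>B i. a \<le> f x} \<and> \<gamma>*n \<le> card (S i)) \<and> (\<forall>s\<in>Pi\<^sub>E I S. goodt g f I s)"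
          using A1 A2 by blast
        then show False using noS by blast
      qed
      have BnI': "\<forall>i\<in>I'. finite (B i) \<and> card (B i) \<le> n" using Bn IU by auto
      have IH: "real (card (G I' (Suc r))) < \<gamma> * card I' * n ^ card I'"
        unfolding G_def
        using less.hyps[OF cardI'lt fI' BnI' less.prems(3,4) noS'] .
      have Usub: "U r \<subseteq> {s\<in>Pi\<^sub>E I B. restrict s I' \<in> G I' (Suc r)}"
      proof
        fix s assume s: "s \<in> U r"
        then have sG: "s \<in> G I a" and rs: "r \<le> f (s c0)" unfolding U_def by auto
        have "restrict s I' \<in> Pi\<^sub>E I' B" using sG IU unfolding G_def by (auto simp: PiE_def Pi_def)
        moreover have "\<forall>i\<in>I'. Suc r \<le> f (restrict s I' i)" using goodI'[OF sG] rs by fastforce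
        moreover have "goodt g f I' (restrict s I')" using sG IU unfolding G_def goodt_def by auto
        ultimately show "s \<in> {s\<in>Pi\<^sub>E I B. restrict s I' \<in> G I' (Suc r)}"
          using sG unfolding G_def by auto
      qed
      have fPI: "finite {s\<in>Pi\<^sub>E I B. restrict s I' \<in> G I' (Suc r)}"
        using fI Bn by (intro finite_subset[OF _ finite_PiE[of I B]]) auto
      have c1: "card (U r) \<le> card {s\<in>Pi\<^sub>E I B. restrict s I' \<in> G I' (Suc r)}"
        using card_mono[OF fPI Usub] .
      have c2: "card {s\<in>Pi\<^sub>E I B. restrict s I' \<in> G I' (Suc r)} \<le> card (Pi\<^sub>E C B) * card {t\<in>Pi\<^sub>E I' B. t \<in> G I' (Suc r)}"
        using card_restrict_split[OF fI IU, of B "\<lambda>t. t \<in> G I' (Suc r)"] Bn by simp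
      have c3: "{t\<in>Pi\<^sub>E I' B. t \<in> G I' (Suc r)} = G I' (Suc r)" unfolding G_def by auto
      have c4: "card (Pi\<^sub>E C B) \<le> n ^ card C"
      proof -
        have "card (Pi\<^sub>E C B) = (\<Prod>i\<in>C. card (B i))" using fC by (simp add: card_PiE)
        also have "\<dots> \<le> (\<Prod>i\<in>C. n)" using Bn CI by (intro prod_mono) auto
        finally show ?thesis by simp
      qed
      have "card (U r) \<le> n ^ card C * card (G I' (Suc r))"
      proof -
        have c5: "card (Pi\<^sub>E C B) * card (G I' (Suc r)) \<le> n ^ card C * card (G I' (Suc r))"
          using c4 by (rule mult_le_mono1)
        show ?thesis using c1 c2[unfolded c3] c5 by linarith
      qed
      then have "real (card (U r)) \<le> real n ^ card C * real (card (G I' (Suc r)))"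
        by (metis of_nat_le_iff of_nat_mult of_nat_power)
      also have "\<dots> \<le> real n ^ card C * (\<gamma> * card I' * n ^ card I')"
        using IH by (intro mult_left_mono) auto
      also have "\<dots> = \<gamma> * card I' * n ^ card I" using cardI by (simp add: power_add)
      finally show ?thesis .
    qed
    have "G I a = L r \<union> U r" "L r \<inter> U r = {}" unfolding L_def U_def by auto
    then have "card (G I a) = card (L r) + card (U r)"
      using finG by (metis card_Un_disjoint finite_Un)
    then have "real (card (G I a)) < \<gamma> * card C * n ^ card I + \<gamma> * card I' * n ^ card I"
      using Lb Ub by simp
    also have "\<dots> = \<gamma> * card I * n ^ card I" using cardI by (simp add: algebra_simps)
    finally show ?thesis unfolding G_def .
  qed
qed


lemma rank:
  assumes "preorder_on A r" "total_on A r" "finite A" "x\<in>A" "y\<in>A"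
  shows "(x,y)\<in>r \<longleftrightarrow> card{z\<in>A. (z,x)\<in>r} \<le> card{z\<in>A. (z,y)\<in>r}"
proof
  assume xy: "(x,y)\<in>r"
  have "{z\<in>A. (z,x)\<in>r} \<subseteq> {z\<in>A. (z,y)\<in>r}"
    using assms(1) xy unfolding preorder_on_def trans_def by blast
  then show "card{z\<in>A. (z,x)\<in>r} \<le> card{z\<in>A. (z,y)\<in>r}" using assms(3) by (intro card_mono) auto
next
  assume c: "card{z\<in>A. (z,x)\<in>r} \<le> card{z\<in>A. (z,y)\<in>r}"
  show "(x,y)\<in>r"
  proof (rule ccontr)
    assume nxy: "(x,y)\<notin>r"
    have yx: "(y,x)\<in>r" using nxy assms unfolding total_on_def preorder_on_def refl_on_def by metis
    have "{z\<in>A. (z,y)\<in>r} \<subset> {z\<in>A. (z,x)\<in>r}"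
      using assms(1,4) yx nxy unfolding preorder_on_def trans_def refl_on_def by blast
    then have "card{z\<in>A. (z,y)\<in>r} < card{z\<in>A. (z,x)\<in>r}" using assms(3) by (intro psubset_card_mono) auto
    then show False using c by simp
  qed
qed

theorem lemma5p6:
  fixes k n :: nat and \<gamma> :: real and Rk R :: "nat rel"
  assumes "k > 0" and "n > 0" and "\<gamma> > 0"
    and "quasi_order_on {1..k} Rk"
    and "quasi_order_on {1..k*n} R"
    and "real (card {s \<in> Pi\<^sub>E {1..k} (\<lambda>i. {(i-1)*n+1..i*n}).
            \<forall>i\<in>{1..k}. \<forall>j\<in>{1..k}. (s i, s j) \<in> R \<longleftrightarrow> (i, j) \<in> Rk})
          \<ge> \<gamma> * real k * real n ^ k"
  shows "\<exists>S :: nat \<Rightarrow> nat set.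
           (\<forall>i\<in>{1..k}. S i \<subseteq> {(i-1)*n+1..i*n} \<and> real (card (S i)) \<ge> \<gamma> * real n) \<and>
           (\<forall>s\<in>Pi\<^sub>E {1..k} S. \<forall>i\<in>{1..k}. \<forall>j\<in>{1..k}. (s i, s j) \<in> R \<longleftrightarrow> (i, j) \<in> Rk)"
proof -
  define f where "f x = card{z\<in>{1..k*n}. (z,x)\<in>R}" for x
  define g where "g i = card{z\<in>{1..k}. (z,i)\<in>Rk}" for i
  define B where "B i = {(i-1)*n+1..i*n}" for i
  have Bsub: "B i \<subseteq> {1..k*n}" if "i \<in> {1..k}" for i
  proof -
    have "i*n \<le> k*n" using that by simp
    then show ?thesis unfolding B_def by auto
  qed
  have fR: "(x,y)\<in>R \<longleftrightarrow> f x \<le> f y" if "x\<in>{1..k*n}" "y\<in>{1..k*n}" for x y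
    unfolding f_def using rank[of "{1..k*n}" R x y] assms(5) that unfolding quasi_order_on_def by auto
  have gR: "(i,j)\<in>Rk \<longleftrightarrow> g i \<le> g j" if "i\<in>{1..k}" "j\<in>{1..k}" for i j
    unfolding g_def using rank[of "{1..k}" Rk i j] assms(4) that unfolding quasi_order_on_def by auto
  have eqv: "(\<forall>i\<in>{1..k}. \<forall>j\<in>{1..k}. (s i, s j) \<in> R \<longleftrightarrow> (i, j) \<in> Rk) \<longleftrightarrow> goodt g f {1..k} s"
    if "s \<in> Pi\<^sub>E {1..k} B" for s
  proof -
    have "s i \<in> {1..k*n}" if "i\<in>{1..k}" for i using Bsub[OF that] \<open>s \<in> Pi\<^sub>E {1..k} B\<close> that by blast
    then show ?thesis unfolding goodt_def using fR gR by auto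
  qed
  have setq: "{s \<in> Pi\<^sub>E {1..k} (\<lambda>i. {(i-1)*n+1..i*n}).
            \<forall>i\<in>{1..k}. \<forall>j\<in>{1..k}. (s i, s j) \<in> R \<longleftrightarrow> (i, j) \<in> Rk}
     = {s\<in>Pi\<^sub>E {1..k} B. (\<forall>i\<in>{1..k}. 0 \<le> f (s i)) \<and> goodt g f {1..k} s}"
    using eqv unfolding B_def[symmetric] by auto
  have cardB: "\<forall>i\<in>{1..k}. finite (B i) \<and> card (B i) \<le> n" unfolding B_def by (auto simp: diff_mult_distrib)
  have "\<exists>S. (\<forall>i\<in>{1..k}. S i \<subseteq> {x\<in>B i. 0 \<le> f x} \<and> \<gamma>*n \<le> card (S i)) \<and> (\<forall>s\<in>Pi\<^sub>E {1..k} S. goodt g f {1..k} s)"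
  proof (rule ccontr)
    assume "\<not> ?thesis"
    from main[OF _ cardB assms(2,3) this] assms(6) setq show False by simp
  qed
  then obtain S where S1: "\<forall>i\<in>{1..k}. S i \<subseteq> {x\<in>B i. 0 \<le> f x} \<and> \<gamma>*n \<le> card (S i)"
    and S2: "\<forall>s\<in>Pi\<^sub>E {1..k} S. goodt g f {1..k} s" by blast
  have "s \<in> Pi\<^sub>E {1..k} B" if "s\<in>Pi\<^sub>E {1..k} S" for s using that S1 unfolding PiE_def Pi_def by blast
  then show ?thesis using S1 S2 eqv unfolding B_def[symmetric] by (intro exI[of _ S]) blast
qed
end
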